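(* Let $(F,v)$ be a valued field, $(V,q)$ a quadratic space over $F$, and $\alpha$ a $v$-norm on $V$ which is compatible of depth $\varepsilon$ with $q$, where $0\le\varepsilon<v(2)$. Then there are $2$-dimensional subspaces $V_1,\dots,V_n$ of $V$ such that, with $q_i=q|_{V_i}$ and $\alpha_i=\alpha|_{V_i}$: (1) $(V,q)=(V_1,q_1)\perp\dots\perp(V_n,q_n)$ (orthogonal sum with respect to the polar form $b_q$); (2) each $\alpha_i$ is a $v$-norm on $V_i$ which is $\varepsilon$-compatible with $q_i$, and $\alpha=\alpha_1\oplus\dots\oplus\alpha_n$, i.e. $\alpha(x_1+\dots+x_n)=\min_i\alpha(x_i)$ for $x_i\in V_i$.
   Context: $F$ is a field with valuation $v\colon F\to\Gamma\cup\{\infty\}$, $\Gamma$ divisible totally ordered abelian group; $v(2)=\infty$ iff $\operatorname{char}F=2$. A $v$-norm on a finite-dimensional $F$-space $V$ is $\alpha\colon V\to\Gamma\cup\{\infty\}$ with $\alpha(x)=\infty\iff x=0$, $\alpha(\lambda x)=v(\lambda)+\alpha(x)$, $\alpha(x+y)\ge\min(\alpha(x),\alpha(y))$, admitting a basis $(e_i)$ with $\alpha(\sum\lambda_ie_i)=\min\alpha(\lambda_ie_i)$. For $\varepsilon\in\Gamma$, $\varepsilon\ge0$, $\alpha$ is $\varepsilon$-compatible (compatible of depth $\varepsilon$) with $q$, whose polar form is $b_q(x,y)=q(x+y)-q(x)-q(y)$, if (a) $v(b_q(x,y))\ge\alpha(x)+\alpha(y)+\varepsilon$ for all $x,y$;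 (b) $v(q(x))\ge2\alpha(x)$ for all $x$; (c) for every $x\ne0$ there is $y\ne0$ with $v(b_q(x,y))=\alpha(x)+\alpha(y)+\varepsilon$. *)

theory Defs
  imports Complex_Main
begin

datatype 'g ext = Fin 'g | Infty

instantiation ext :: (linorder) linorder
begin
fun less_eq_ext :: "'a ext \<Rightarrow> 'a ext \<Rightarrow> bool" where
  "less_eq_ext _ Infty = True"
| "less_eq_ext Infty (Fin _) = False"
| "less_eq_ext (Fin x) (Fin y) = (x \<le> y)"
definition less_ext :: "'a ext \<Rightarrow> 'a ext \<Rightarrow> bool" where
  "less_ext x y = (x \<le> y \<and> \<not> y \<le> x)"
instance
proof
  fix x y z :: "'a ext"
  show "(x < y) = (x \<le> y \<and> \<not> y \<le> x)" by (simp add: less_ext_def)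
  show "x \<le> x" by (cases x) auto
  show "x \<le> y \<Longrightarrow> y \<le> z \<Longrightarrow> x \<le> z" by (cases x; cases y; cases z) auto
  show "x \<le> y \<Longrightarrow> y \<le> x \<Longrightarrow> x = y" by (cases x; cases y) auto
  show "x \<le> y \<or> y \<le> x" by (cases x; cases y) auto
qed
end

instantiation ext :: (plus) plus
begin
fun plus_ext :: "'a ext \<Rightarrow> 'a ext \<Rightarrow> 'a ext" where
  "plus_ext (Fin x) (Fin y) = Fin (x + y)"
| "plus_ext _ _ = Infty"
instance ..
end

definition ext_Min :: "'g::linorder ext set \<Rightarrow> 'g ext" where
  "ext_Min S = (if S = {} then Infty else Min S)"

definition divisible_group :: "'g::linordered_ab_group_add itself \<Rightarrow> bool" where
  "divisible_group _ \<longleftrightarrow> (\<forall>x::'g. \<forall>n::nat. n > 0 \<longrightarrow> (\<exists>y. (\<Sum>i<n. y) = x))"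

definition valuation :: "('a::field \<Rightarrow> 'g::linordered_ab_group_add ext) \<Rightarrow> bool" where
  "valuation v \<longleftrightarrow>
     (\<forall>x. v x = Infty \<longleftrightarrow> x = 0) \<and>
     (\<forall>x y. v (x * y) = v x + v y) \<and>
     (\<forall>x y. v (x + y) \<ge> min (v x) (v y))"

definition polar :: "('v::ab_group_add \<Rightarrow> 'a::field) \<Rightarrow> 'v \<Rightarrow> 'v \<Rightarrow> 'a" where
  "polar q x y = q (x + y) - q x - q y"

definition quadratic_form :: "('a::field \<Rightarrow> 'v::ab_group_add \<Rightarrow> 'v) \<Rightarrow> ('v \<Rightarrow> 'a) \<Rightarrow> bool" where
  "quadratic_form scale q \<longleftrightarrow>
     (\<forall>c x. q (scale c x) = c * c * q x) \<and>
     (\<forall>x y z. polar q (x + y) z = polar q x z + polar q y z) \<and>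
     (\<forall>c x y. polar q (scale c x) y = c * polar q x y)"

definition vnorm_on ::
  "('a::field \<Rightarrow> 'v::ab_group_add \<Rightarrow> 'v) \<Rightarrow> ('a \<Rightarrow> 'g::linordered_ab_group_add ext)
    \<Rightarrow> 'v set \<Rightarrow> ('v \<Rightarrow> 'g ext) \<Rightarrow> bool" where
  "vnorm_on scale v W \<alpha> \<longleftrightarrow>
     (\<forall>x\<in>W. \<alpha> x = Infty \<longleftrightarrow> x = 0) \<and>
     (\<forall>c. \<forall>x\<in>W. \<alpha> (scale c x) = v c + \<alpha> x) \<and>
     (\<forall>x\<in>W. \<forall>y\<in>W. \<alpha> (x + y) \<ge> min (\<alpha> x) (\<alpha> y)) \<and>
     (\<exists>B. finite B \<and> B \<subseteq> W \<and> \<not> module.dependent scale B \<and> module.span scale B = W \<and>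
        (\<forall>c. \<alpha> (\<Sum>e\<in>B. scale (c e) e) = ext_Min ((\<lambda>e. \<alpha> (scale (c e) e)) ` B)))"

definition compatible_on ::
  "('a::field \<Rightarrow> 'g::linordered_ab_group_add ext) \<Rightarrow> 'g \<Rightarrow> 'v::ab_group_add set
    \<Rightarrow> ('v \<Rightarrow> 'a) \<Rightarrow> ('v \<Rightarrow> 'g ext) \<Rightarrow> bool" where
  "compatible_on v \<epsilon> W q \<alpha> \<longleftrightarrow>
     (\<forall>x\<in>W. \<forall>y\<in>W. v (polar q x y) \<ge> \<alpha> x + \<alpha> y + Fin \<epsilon>) \<and>
     (\<forall>x\<in>W. v (q x) \<ge> \<alpha> x + \<alpha> x) \<and>
     (\<forall>x\<in>W. x \<noteq> 0 \<longrightarrow> (\<exists>y\<in>W. y \<noteq> 0 \<and> v (polar q x y) = \<alpha> x + \<alpha> y + Fin \<epsilon>))"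

end

theory Submission
  imports Defs
begin


lemma ext_le_Infty[simp]: "x \<le> Infty" by (cases x) auto
lemma Infty_le_iff[simp]: "Infty \<le> x \<longleftrightarrow> x = Infty" by (cases x) auto
lemma Fin_le_Fin[simp]: "Fin a \<le> Fin b \<longleftrightarrow> a \<le> b" by simp
lemma Fin_less_Fin[simp]: "Fin a < Fin b \<longleftrightarrow> a < b" by (auto simp: less_ext_def)
lemma less_Infty_iff[simp]: "x < Infty \<longleftrightarrow> x \<noteq> Infty" by (cases x) (auto simp: less_ext_def)
lemma Infty_less[simp]: "\<not> Infty < x" by (cases x) (auto simp: less_ext_def)
lemma plus_Infty[simp]: "x + Infty = Infty" "Infty + x = Infty" by (cases x; simp)+
lemma ext_add_comm: "(a::'g::linordered_ab_group_add ext) + b = b + a"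
  by (cases a; cases b) (auto simp: add.commute)
lemma ext_add_assoc: "((a::'g::linordered_ab_group_add ext) + b) + c = a + (b + c)"
  by (cases a; cases b; cases c) (auto simp: add.assoc)
lemma ext_add_eq_Infty[simp]: "a + b = Infty \<longleftrightarrow> a = Infty \<or> b = Infty"
  by (cases a; cases b) auto
lemma ext_add_mono: "(a::'g::linordered_ab_group_add ext) \<le> b \<Longrightarrow> c \<le> d \<Longrightarrow> a + c \<le> b + d"
  by (cases a; cases b; cases c; cases d) (auto intro: add_mono)
lemma ext_add_strict_mono: "(a::'g::linordered_ab_group_add ext) < b \<Longrightarrow> c \<le> d \<Longrightarrow> c \<noteq> Infty \<Longrightarrow> a + c < b + d"
  by (cases a; cases b; cases c; cases d) (auto simp: less_ext_def intro: add_mono, metis add_less_le_mono antisym_conv3 not_le)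
lemma ext_add_le_cancel: "c \<noteq> Infty \<Longrightarrow> ((a::'g::linordered_ab_group_add ext) + c \<le> b + c) = (a \<le> b)"
  by (cases a; cases b; cases c) auto
lemma ext_add_less_cancel: "c \<noteq> Infty \<Longrightarrow> ((a::'g::linordered_ab_group_add ext) + c < b + c) = (a < b)"
  by (cases a; cases b; cases c) (auto simp: less_ext_def)
lemma ext_add_eq_cancel: "c \<noteq> Infty \<Longrightarrow> ((a::'g::linordered_ab_group_add ext) + c = b + c) = (a = b)"
  by (cases a; cases b; cases c) auto
lemma ext_add_min: "(c::'g::linordered_ab_group_add ext) + min a b = min (c + a) (c + b)"
  by (cases a; cases b; cases c) (auto simp: min_def)
lemma Fin0_add[simp]: "Fin (0::'g::linordered_ab_group_add) + a = a" "a + Fin 0 = a"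
  by (cases a; simp)+

lemma ext_Min_alt: "finite S \<Longrightarrow> ext_Min S = Min (insert Infty S)"
  unfolding ext_Min_def
  by (auto simp: min_def intro!: Min_insert[symmetric, THEN trans])



locale qsetting = vector_space scale
  for scale :: "'a::field \<Rightarrow> 'v::ab_group_add \<Rightarrow> 'v" (infixr \<open>*s\<close> 75) +
  fixes v :: "'a \<Rightarrow> 'g::linordered_ab_group_add ext" and q :: "'v \<Rightarrow> 'a"
    and \<alpha> :: "'v \<Rightarrow> 'g ext" and \<epsilon> :: 'g
  assumes val: "valuation v" and qf: "quadratic_form scale q"
    and vn: "vnorm_on scale v UNIV \<alpha>"
    and comp: "compatible_on v \<epsilon> UNIV q \<alpha>" and eps2: "Fin \<epsilon> < v 2"
begin

lemma v_Infty_iff[simp]: "v x = Infty \<longleftrightarrow> x = 0" using val unfolding valuation_def by blast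
lemma v_mult: "v (x * y) = v x + v y" using val unfolding valuation_def by blast
lemma v_add: "min (v x) (v y) \<le> v (x + y)" using val unfolding valuation_def by blast

lemma v_one: "v 1 = Fin 0"
proof -
  have "v 1 = v 1 + v 1" using v_mult[of 1 1] by simp
  moreover have "v 1 \<noteq> Infty" by simp
  ultimately show ?thesis by (cases "v 1") auto
qed

lemma v_minus_one: "v (-1) = Fin 0"
proof -
  have "v (-1) + v (-1) = Fin 0" using v_mult[of "-1" "-1"] v_one by simp
  moreover have "v (-1) \<noteq> Infty" by simp
  ultimately obtain t where "v (-1) = Fin t" "t + t = 0" by (cases "v (-1)") auto
  moreover have "t = 0"
  proof (rule ccontr)
    assume "t \<noteq> 0"
    then have "t < 0 \<or> t > 0" by auto
    then show False using \<open>t + t = 0\<close>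
      by (metis add_neg_neg add_pos_pos less_irrefl)
  qed
  ultimately show ?thesis by simp
qed

lemma v_neg[simp]: "v (- x) = v x"
  using v_mult[of "-1" x] v_minus_one by simp

lemma v_nonzero_Fin: "x \<noteq> 0 \<Longrightarrow> \<exists>t. v x = Fin t"
  by (cases "v x") auto

lemma v_inverse: "x \<noteq> 0 \<Longrightarrow> v (inverse x) + v x = Fin 0"
  using v_mult[of "inverse x" x] v_one by simp

lemma alpha_Infty_iff[simp]: "\<alpha> x = Infty \<longleftrightarrow> x = 0" using vn unfolding vnorm_on_def by blast
lemma alpha_scale: "\<alpha> (c *s x) = v c + \<alpha> x" using vn unfolding vnorm_on_def by blast
lemma alpha_add: "min (\<alpha> x) (\<alpha> y) \<le> \<alpha> (x + y)" using vn unfolding vnorm_on_def by blast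
lemma alpha_zero[simp]: "\<alpha> 0 = Infty" by simp

lemma alpha_neg[simp]: "\<alpha> (- x) = \<alpha> x"
proof -
  have "- x = (-1) *s x" using scale_minus_left[of 1 x] by simp
  then show ?thesis using alpha_scale[of "-1" x] v_minus_one by simp
qed

lemma alpha_diff: "min (\<alpha> x) (\<alpha> y) \<le> \<alpha> (x - y)"
  using alpha_add[of x "-y"] by simp

lemma alpha_strict: assumes "\<alpha> x < \<alpha> y" shows "\<alpha> (x + y) = \<alpha> x"
proof -
  have 1: "\<alpha> x \<le> \<alpha> (x + y)" using alpha_add[of x y] assms by simp
  have "min (\<alpha> (x + y)) (\<alpha> y) \<le> \<alpha> x" using alpha_diff[of "x + y" y] by simp
  then have "\<alpha> (x + y) \<le> \<alpha> x" using assms by (auto simp: min_def split: if_splits)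
  with 1 show ?thesis by simp
qed

lemma alpha_strict': assumes "\<alpha> y < \<alpha> x" shows "\<alpha> (x + y) = \<alpha> y"
  using alpha_strict[OF assms] by (simp add: add.commute)

lemma alpha_sum_ge: "finite I \<Longrightarrow> (\<And>i. i \<in> I \<Longrightarrow> m \<le> \<alpha> (f i)) \<Longrightarrow> m \<le> \<alpha> (sum f I)"
proof (induction I rule: finite_induct)
  case empty then show ?case by simp
next
  case (insert i I)
  then have "m \<le> min (\<alpha> (f i)) (\<alpha> (sum f I))" by simp
  also have "\<dots> \<le> \<alpha> (f i + sum f I)" by (rule alpha_add)
  finally show ?case using insert by simp
qed

lemma alpha_nonzero_Fin: "x \<noteq> 0 \<Longrightarrow> \<exists>t. \<alpha> x = Fin t"
  by (cases "\<alpha> x") auto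

abbreviation b where "b x y \<equiv> polar q x y"

lemma pol_sym: "b x y = b y x" unfolding polar_def by (simp add: add.commute)
lemma pol_add1: "b (x + y) z = b x z + b y z" using qf unfolding quadratic_form_def by blast
lemma pol_scale1: "b (c *s x) y = c * b x y" using qf unfolding quadratic_form_def by blast
lemma q_scale: "q (c *s x) = c * c * q x" using qf unfolding quadratic_form_def by blast
lemma pol_add2: "b z (x + y) = b z x + b z y" using pol_add1 pol_sym by metis
lemma pol_scale2: "b y (c *s x) = c * b y x" using pol_scale1 pol_sym by metis
lemma pol_zero1[simp]: "b 0 y = 0" using pol_scale1[of 0 0 y] by simp
lemma pol_zero2[simp]: "b y 0 = 0" using pol_scale2[of y 0 0] by simp
lemma pol_neg1: "b (- x) y = - b x y"
  using pol_add1[of x "-x" y] by (simp add: eq_neg_iff_add_eq_0 add.commute)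
lemma pol_neg2: "b y (- x) = - b y x" using pol_neg1 pol_sym by metis
lemma pol_diff1: "b (x - z) y = b x y - b z y"
  using pol_add1[of x "-z" y] pol_neg1[of z y] by simp
lemma pol_diff2: "b y (x - z) = b y x - b y z" using pol_diff1 pol_sym by metis
lemma pol_sum1: "b (sum f I) y = (\<Sum>i\<in>I. b (f i) y)"
  by (induction I rule: infinite_finite_induct) (auto simp: pol_add1)

lemma pol_self: "b x x = 2 * q x"
proof -
  have "x + x = 2 *s x" using scale_left_distrib[of 1 1 x] by simp
  then have "q (x + x) = 4 * q x" using q_scale[of 2 x] by simp
  then show ?thesis unfolding polar_def by simp
qed

lemma compat_a: "\<alpha> x + \<alpha> y + Fin \<epsilon> \<le> v (b x y)" using comp unfolding compatible_on_def by blast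
lemma compat_b: "\<alpha> x + \<alpha> x \<le> v (q x)" using comp unfolding compatible_on_def by blast
lemma compat_c: "x \<noteq> 0 \<Longrightarrow> \<exists>y. y \<noteq> 0 \<and> v (b x y) = \<alpha> x + \<alpha> y + Fin \<epsilon>"
  using comp unfolding compatible_on_def by blast

lemma pol_self_strict: assumes "x \<noteq> 0" shows "\<alpha> x + \<alpha> x + Fin \<epsilon> < v (b x x)"
proof -
  have "v (b x x) = v 2 + v (q x)" by (simp add: pol_self v_mult)
  moreover have "Fin \<epsilon> + (\<alpha> x + \<alpha> x) < v 2 + v (q x)"
    by (rule ext_add_strict_mono[OF eps2 compat_b]) (use assms in simp)
  ultimately show ?thesis by (simp add: ext_add_comm)
qed

end


context qsetting begin

definition splitting :: "'v set \<Rightarrow> bool" where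
  "splitting S \<longleftrightarrow> finite S \<and> (\<forall>c. \<alpha> (\<Sum>e\<in>S. c e *s e) = Min (insert Infty ((\<lambda>e. \<alpha> (c e *s e)) ` S)))"

lemma splitting_finite: "splitting S \<Longrightarrow> finite S" unfolding splitting_def by blast

lemma splittingD: "splitting S \<Longrightarrow> \<alpha> (\<Sum>e\<in>S. c e *s e) = Min (insert Infty ((\<lambda>e. \<alpha> (c e *s e)) ` S))"
  unfolding splitting_def by blast

lemma split_sub: assumes "splitting S" "S' \<subseteq> S" shows "splitting S'"
  unfolding splitting_def
proof (intro conjI allI)
  have fS: "finite S" using assms(1) splitting_finite by blast
  then show fS': "finite S'" using assms(2) finite_subset by blast
  fix c :: "'v \<Rightarrow> 'a"
  define c' where "c' = (\<lambda>e. if e \<in> S' then c e else 0)"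
  have "(\<Sum>e\<in>S. c' e *s e) = (\<Sum>e\<in>S'. c' e *s e)"
    by (rule sum.mono_neutral_right[OF fS assms(2)]) (auto simp: c'_def)
  also have "\<dots> = (\<Sum>e\<in>S'. c e *s e)" by (rule sum.cong) (auto simp: c'_def)
  finally have 1: "(\<Sum>e\<in>S. c' e *s e) = (\<Sum>e\<in>S'. c e *s e)" .
  have 2: "insert Infty ((\<lambda>e. \<alpha> (c' e *s e)) ` S) = insert Infty ((\<lambda>e. \<alpha> (c e *s e)) ` S')"
    using assms(2) by (auto simp: c'_def)
  show "\<alpha> (\<Sum>e\<in>S'. c e *s e) = Min (insert Infty ((\<lambda>e. \<alpha> (c e *s e)) ` S'))"
    using splittingD[OF assms(1), of c'] 1 2 by simp
qed

lemma split_repr: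
  assumes "splitting S" "u \<in> span S"
  shows "\<exists>c. u = (\<Sum>e\<in>S. c e *s e) \<and> \<alpha> u = Min (insert Infty ((\<lambda>e. \<alpha> (c e *s e)) ` S))"
proof -
  obtain c where "u = (\<Sum>e\<in>S. c e *s e)"
    using assms span_finite[OF splitting_finite[OF assms(1)]] by blast
  then show ?thesis using splittingD[OF assms(1)] by blast
qed

lemma split_union_min:
  assumes "splitting (S1 \<union> S2)" "S1 \<inter> S2 = {}" "u1 \<in> span S1" "u2 \<in> span S2"
  shows "\<alpha> (u1 + u2) = min (\<alpha> u1) (\<alpha> u2)"
proof -
  have s1: "splitting S1" and s2: "splitting S2" using split_sub[OF assms(1)] by auto
  have f1: "finite S1" and f2: "finite S2" using s1 s2 splitting_finite by auto
  obtain c1 where c1: "u1 = (\<Sum>e\<in>S1. c1 e *s e)" "\<alpha> u1 = Min (insert Infty ((\<lambda>e. \<alpha> (c1 e *s e)) ` S1))"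
    using split_repr[OF s1 assms(3)] by blast
  obtain c2 where c2: "u2 = (\<Sum>e\<in>S2. c2 e *s e)" "\<alpha> u2 = Min (insert Infty ((\<lambda>e. \<alpha> (c2 e *s e)) ` S2))"
    using split_repr[OF s2 assms(4)] by blast
  define c where "c = (\<lambda>e. if e \<in> S1 then c1 e else c2 e)"
  have "(\<Sum>e\<in>S1 \<union> S2. c e *s e) = (\<Sum>e\<in>S1. c e *s e) + (\<Sum>e\<in>S2. c e *s e)"
    by (rule sum.union_disjoint[OF f1 f2 assms(2)])
  also have "\<dots> = u1 + u2" unfolding c1 c2 c_def using assms(2)
    by (auto intro!: arg_cong2[where f="(+)"] sum.cong)
  finally have 1: "(\<Sum>e\<in>S1 \<union> S2. c e *s e) = u1 + u2" .
  have 2: "insert Infty ((\<lambda>e. \<alpha> (c e *s e)) ` (S1 \<union> S2)) =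
      insert Infty ((\<lambda>e. \<alpha> (c1 e *s e)) ` S1) \<union> insert Infty ((\<lambda>e. \<alpha> (c2 e *s e)) ` S2)"
    using assms(2) by (force simp: c_def)
  have "\<alpha> (u1 + u2) = Min (insert Infty ((\<lambda>e. \<alpha> (c e *s e)) ` (S1 \<union> S2)))"
    using splittingD[OF assms(1), of c] 1 by simp
  also have "\<dots> = min (\<alpha> u1) (\<alpha> u2)" unfolding 2 c1(2) c2(2)
    by (rule Min_Un) (use f1 f2 in auto)
  finally show ?thesis .
qed

lemma split_indep: assumes "splitting S" "0 \<notin> S" shows "independent S"
proof
  assume "dependent S"
  then obtain u e where ue: "e \<in> S" "u e \<noteq> 0" "(\<Sum>v\<in>S. u v *s v) = 0"
    using dependent_finite[OF splitting_finite[OF assms(1)]] by blast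
  have "Infty = Min (insert Infty ((\<lambda>e. \<alpha> (u e *s e)) ` S))"
    using splittingD[OF assms(1), of u] ue(3) by simp
  also have "\<dots> \<le> \<alpha> (u e *s e)"
    using ue(1) splitting_finite[OF assms(1)] by (intro Min_le) auto
  finally show False using ue assms(2) by (auto simp: alpha_scale)
qed

lemma orth_min0:
  assumes "\<alpha> (e + s) \<le> \<alpha> e" shows "\<alpha> (e + s) = min (\<alpha> e) (\<alpha> s)"
proof (cases "\<alpha> s < \<alpha> e")
  case True then show ?thesis using alpha_strict'[OF True] by simp
next
  case False
  then show ?thesis using alpha_add[of e s] assms by (auto simp: min_def)
qed

lemma orth_min:
  assumes "\<forall>s\<in>span S. \<alpha> (e + s) \<le> \<alpha> e" "s \<in> span S"
  shows "\<alpha> (k *s e + s) = min (\<alpha> (k *s e)) (\<alpha> s)"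
proof (cases "k = 0")
  case True then show ?thesis by simp
next
  case False
  define s' where "s' = inverse k *s s"
  have s'S: "s' \<in> span S" unfolding s'_def by (rule span_scale[OF assms(2)])
  have ss: "s = k *s s'" using False by (simp add: s'_def)
  have "k *s e + s = k *s (e + s')" by (simp add: ss scale_right_distrib)
  then have "\<alpha> (k *s e + s) = v k + \<alpha> (e + s')" by (simp add: alpha_scale)
  also have "\<alpha> (e + s') = min (\<alpha> e) (\<alpha> s')" using assms(1) s'S orth_min0 by blast
  finally show ?thesis by (simp add: ss alpha_scale ext_add_min)
qed

lemma split_insert:
  assumes "splitting S" "e \<notin> S" "\<forall>s\<in>span S. \<alpha> (e + s) \<le> \<alpha> e"
  shows "splitting (insert e S)"
  unfolding splitting_def
proof (intro conjI allI)
  have fS: "finite S" using assms(1) splitting_finite by blast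
  then show "finite (insert e S)" by simp
  fix c
  have "(\<Sum>x\<in>insert e S. c x *s x) = c e *s e + (\<Sum>x\<in>S. c x *s x)"
    using fS assms(2) by simp
  moreover have "(\<Sum>x\<in>S. c x *s x) \<in> span S" by (rule span_sum) (intro span_scale span_base; simp)
  ultimately have "\<alpha> (\<Sum>x\<in>insert e S. c x *s x) = min (\<alpha> (c e *s e)) (\<alpha> (\<Sum>x\<in>S. c x *s x))"
    using orth_min[OF assms(3)] by simp
  also have "\<dots> = Min (insert Infty ((\<lambda>x. \<alpha> (c x *s x)) ` insert e S))"
  proof -
    have "Min (insert Infty ((\<lambda>x. \<alpha> (c x *s x)) ` insert e S)) =
      Min (insert (\<alpha> (c e *s e)) (insert Infty ((\<lambda>x. \<alpha> (c x *s x)) ` S)))"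
      by (simp add: insert_commute)
    also have "\<dots> = min (\<alpha> (c e *s e)) (Min (insert Infty ((\<lambda>x. \<alpha> (c x *s x)) ` S)))"
      by (rule Min_insert) (use fS in auto)
    finally show ?thesis using splittingD[OF assms(1), of c] by simp
  qed
  finally show "\<alpha> (\<Sum>x\<in>insert e S. c x *s x) = Min (insert Infty ((\<lambda>x. \<alpha> (c x *s x)) ` insert e S))" .
qed

end


context qsetting begin

lemma Min_gt:
  assumes "finite A" "\<And>a. a \<in> A \<Longrightarrow> m < a" "m \<noteq> Infty"
  shows "m < Min (insert Infty A)"
  using assms by (subst Min_gr_iff) auto

lemma extend_split:
  assumes sB: "splitting B" and B0: "0 \<notin> B" and sT: "splitting T" and T0: "0 \<notin> T"
    and TB: "T \<subseteq> span B"
  shows "\<exists>G\<subseteq>B. T \<inter> G = {} \<and> splitting (T \<union> G) \<and> span (T \<union> G) = span B"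
proof -
  have fB: "finite B" using sB splitting_finite by blast
  have fT: "finite T" using sT splitting_finite by blast
  define C where "C = {G. G \<subseteq> B \<and> T \<inter> G = {} \<and> splitting (T \<union> G)}"
  have fC: "finite C" unfolding C_def using fB by (auto intro: finite_subset[of _ "Pow B"])
  have "{} \<in> C" unfolding C_def using sT by simp
  then have ne: "card ` C \<noteq> {}" by auto
  have "Max (card ` C) \<in> card ` C" using fC ne by (intro Max_in) auto
  then obtain G where GC: "G \<in> C" and Gmax: "card G = Max (card ` C)" by auto
  have maxG: "\<And>G'. G' \<in> C \<Longrightarrow> card G' \<le> card G" unfolding Gmax using fC by (intro Max_ge) auto
  have GB: "G \<subseteq> B" and TG: "T \<inter> G = {}" and sS: "splitting (T \<union> G)" using GC unfolding C_def by auto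
  define S where "S = T \<union> G"
  have fS: "finite S" using sS splitting_finite S_def by blast
  have S0: "0 \<notin> S" unfolding S_def using T0 B0 GB by auto
  have SB: "S \<subseteq> span B" unfolding S_def using TB GB span_superset by blast
  have spSB: "span S \<subseteq> span B" using SB by (simp add: span_minimal)
  have indS: "independent S" using split_indep[OF sS[folded S_def] S0] .
  show ?thesis
  proof (rule ccontr)
    assume nex: "\<not> ?thesis"
    then have neq: "span S \<noteq> span B" using GB TG sS unfolding S_def by blast
    have ex: "\<forall>e\<in>B. \<exists>s\<in>span S. \<alpha> e < \<alpha> (e + s)"
    proof
      fix e assume eB: "e \<in> B"
      show "\<exists>s\<in>span S. \<alpha> e < \<alpha> (e + s)"
      proof (cases "e \<in> S")
        case True
        then show ?thesis using eB B0 by (intro bexI[of _ "- e"]) (auto intro: span_neg span_base)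
      next
        case False
        show ?thesis
        proof (rule ccontr)
          assume "\<not> ?thesis"
          then have "\<forall>s\<in>span S. \<alpha> (e + s) \<le> \<alpha> e" by (auto simp: not_less)
          then have "splitting (insert e S)" using split_insert[OF sS[folded S_def] False] by blast
          then have "insert e G \<in> C" unfolding C_def using False eB GB TG unfolding S_def by auto
          then have "card (insert e G) \<le> card G" by (rule maxG)
          moreover have "finite G" using GB fB finite_subset by blast
          ultimately show False using False unfolding S_def by simp
        qed
      qed
    qed
    then obtain f where f: "\<And>e. e \<in> B \<Longrightarrow> f e \<in> span S \<and> \<alpha> e < \<alpha> (e + f e)"
      by metis
    have indB: "independent B" using split_indep[OF sB B0] .
    have key: "\<And>c. (\<Sum>e\<in>B. c e *s f e) = 0 \<Longrightarrow> \<forall>e\<in>B. c e = 0"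
    proof -
      fix c assume z: "(\<Sum>e\<in>B. c e *s f e) = 0"
      define u where "u = (\<Sum>e\<in>B. c e *s e)"
      have r: "(\<Sum>e\<in>B. c e *s (e + f e)) = u"
        unfolding u_def using z by (simp add: scale_right_distrib sum.distrib)
      have u0: "u = 0"
      proof (rule ccontr)
        assume "u \<noteq> 0"
        define m where "m = \<alpha> u"
        have mI: "m \<noteq> Infty" using \<open>u \<noteq> 0\<close> m_def by simp
        have m: "m = Min (insert Infty ((\<lambda>e. \<alpha> (c e *s e)) ` B))" unfolding m_def u_def
          by (rule splittingD[OF sB])
        have lt: "\<And>e. e \<in> B \<Longrightarrow> m < \<alpha> (c e *s (e + f e))"
        proof -
          fix e assume eB: "e \<in> B"
          show "m < \<alpha> (c e *s (e + f e))"
          proof (cases "c e = 0")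
            case True then show ?thesis using mI by simp
          next
            case False
            have "m \<le> \<alpha> (c e *s e)" unfolding m using eB fB by (intro Min_le) auto
            also have "\<alpha> (c e *s e) = v (c e) + \<alpha> e" by (rule alpha_scale)
            also have "\<dots> < v (c e) + \<alpha> (e + f e)"
              using f[OF eB] False ext_add_less_cancel[of "v (c e)" "\<alpha> e" "\<alpha> (e + f e)"]
              by (simp add: ext_add_comm[of "v (c e)"])
            also have "\<dots> = \<alpha> (c e *s (e + f e))" by (simp add: alpha_scale)
            finally show ?thesis .
          qed
        qed
        have "m < Min (insert Infty ((\<lambda>e. \<alpha> (c e *s (e + f e))) ` B))"
          using fB lt mI by (intro Min_gt) auto
        also have "\<dots> \<le> \<alpha> (\<Sum>e\<in>B. c e *s (e + f e))"
          using fB by (intro alpha_sum_ge) (auto intro: Min_le)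
        finally show False using r m_def by simp
      qed
      show "\<forall>e\<in>B. c e = 0"
        using indB u0 dependent_finite[OF fB] unfolding u_def by blast
    qed
    have inj: "inj_on f B"
    proof
      fix e1 e2 assume e: "e1 \<in> B" "e2 \<in> B" "f e1 = f e2"
      show "e1 = e2"
      proof (rule ccontr)
        assume ne: "e1 \<noteq> e2"
        define c where "c = (\<lambda>e. if e = e1 then (1::'a) else if e = e2 then -1 else 0)"
        have "(\<Sum>e\<in>B. c e *s f e) = (\<Sum>e\<in>{e1,e2}. c e *s f e)"
          using e fB by (intro sum.mono_neutral_right) (auto simp: c_def)
        also have "\<dots> = 0" using ne e(3) by (simp add: c_def scale_minus_left)
        finally have "c e1 = 0" using key[of c] e(1) by blast
        then show False by (simp add: c_def)
      qed
    qed
    have indf: "independent (f ` B)"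
    proof
      assume "dependent (f ` B)"
      then obtain d w where dw: "w \<in> f ` B" "d w \<noteq> 0" "(\<Sum>x\<in>f ` B. d x *s x) = 0"
        using dependent_finite[of "f ` B"] fB by blast
      have "(\<Sum>e\<in>B. d (f e) *s f e) = 0" using dw(3) sum.reindex[OF inj, of "\<lambda>x. d x *s x"] by simp
      then show False using key[of "d \<circ> f"] dw(1,2) by auto
    qed
    have "f ` B \<subseteq> span S" using f by auto
    then have c1: "card B \<le> card S"
      using independent_span_bound[OF fS indf] card_image[OF inj] by simp
    obtain b0 where b0: "b0 \<in> B" "b0 \<notin> span S"
    proof (rule ccontr)
      assume "\<not> thesis"
      then have "B \<subseteq> span S" using that by blast
      then have "span B \<subseteq> span S" by (simp add: span_minimal)
      then show False using neq spSB by blast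
    qed
    have "independent (insert b0 S)" using independent_insertI[OF b0(2) indS] .
    moreover have "insert b0 S \<subseteq> span B" using SB b0(1) span_superset by blast
    ultimately have "card (insert b0 S) \<le> card B" using independent_span_bound[OF fB] by blast
    moreover have "b0 \<notin> S" using b0(2) span_superset by blast
    ultimately show False using c1 fS by simp
  qed
qed

end


lemma fld1: "(A::'a::field)*B - C*C \<noteq> 0 \<Longrightarrow> (Z1*B - C*Z2)/(A*B-C*C) * A + (A*Z2 - C*Z1)/(A*B-C*C) * C = Z1"
  by (simp add: divide_simps) (simp add: algebra_simps)
lemma fld2: "(A::'a::field)*B - C*C \<noteq> 0 \<Longrightarrow> (Z1*B - C*Z2)/(A*B-C*C) * C + (A*Z2 - C*Z1)/(A*B-C*C) * B = Z2"
  by (simp add: divide_simps) (simp add: algebra_simps)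

context qsetting begin

lemma v_zero[simp]: "v 0 = Infty" by simp

lemma v_strict: assumes "v a < v c" shows "v (a + c) = v a"
proof -
  have 1: "v a \<le> v (a + c)" using v_add[of a c] assms by simp
  have "min (v (a + c)) (v (- c)) \<le> v a" using v_add[of "a + c" "- c"] by simp
  then have "v (a + c) \<le> v a" using assms by (auto simp: min_def split: if_splits)
  with 1 show ?thesis by simp
qed

lemma cancel3: "c \<noteq> Infty \<Longrightarrow> (a + c + Fin e \<le> d + c + Fin e) = ((a::'g ext) \<le> d)"
  by (cases a; cases c; cases d) auto

end

locale qpair = qsetting scale v q \<alpha> \<epsilon>
  for scale :: "'a::field \<Rightarrow> 'v::ab_group_add \<Rightarrow> 'v" (infixr \<open>*s\<close> 75)
    and v :: "'a \<Rightarrow> 'g::linordered_ab_group_add ext" and q and \<alpha> and \<epsilon> +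
  fixes x :: 'v and y :: 'v
  assumes x0: "x \<noteq> 0" and y0: "y \<noteq> 0" and xy: "v (b x y) = \<alpha> x + \<alpha> y + Fin \<epsilon>"
begin

lemma swap: "qpair scale v q \<alpha> \<epsilon> y x"
  using qsetting_axioms x0 y0 xy unfolding qpair_def qpair_axioms_def
  by (simp add: pol_sym[of y x] ext_add_comm[of "\<alpha> y"])

lemma x_ne_y: "x \<noteq> y"
  using pol_self_strict[OF x0] xy by auto

lemma pairA:
  assumes le: "\<alpha> (a *s x) \<le> \<alpha> (c *s y)"
  shows "v (b (a *s x + c *s y) y) = \<alpha> (a *s x) + \<alpha> y + Fin \<epsilon>"
proof (cases "a = 0")
  case True
  then have "c = 0" using le y0 by simp
  then show ?thesis using True by simp
next
  case False
  have e: "b (a *s x + c *s y) y = a * b x y + c * b y y" by (simp add: pol_add1 pol_scale1)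
  have M: "v (a * b x y) = \<alpha> (a *s x) + \<alpha> y + Fin \<epsilon>"
    by (simp add: v_mult xy alpha_scale ext_add_assoc)
  have fin: "\<alpha> (a *s x) + \<alpha> y + Fin \<epsilon> \<noteq> Infty" using False x0 y0 by (simp add: alpha_scale)
  have "v (a * b x y) < v (c * b y y)"
  proof (cases "c = 0")
    case True then show ?thesis using M fin by simp
  next
    case False
    have "v (a * b x y) \<le> \<alpha> (c *s y) + \<alpha> y + Fin \<epsilon>"
      unfolding M using le by (intro ext_add_mono) auto
    also have "\<dots> = v c + (\<alpha> y + \<alpha> y + Fin \<epsilon>)" by (simp add: alpha_scale ext_add_assoc)
    also have "\<dots> < v c + v (b y y)"
      using pol_self_strict[OF y0] False ext_add_less_cancel[of "v c" "\<alpha> y + \<alpha> y + Fin \<epsilon>" "v (b y y)"]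
      by (simp add: ext_add_comm[of "v c"])
    finally show ?thesis by (simp add: v_mult)
  qed
  then show ?thesis using e M v_strict by simp
qed

lemma pairA':
  assumes le: "\<alpha> (c *s y) \<le> \<alpha> (a *s x)"
  shows "v (b (a *s x + c *s y) x) = \<alpha> (c *s y) + \<alpha> x + Fin \<epsilon>"
  using qpair.pairA[OF swap le] by (simp add: add.commute)

lemma pair_alpha: "\<alpha> (a *s x + c *s y) = min (\<alpha> (a *s x)) (\<alpha> (c *s y))"
proof (cases "\<alpha> (a *s x) \<le> \<alpha> (c *s y)")
  case True
  have "\<alpha> (a *s x + c *s y) + \<alpha> y + Fin \<epsilon> \<le> \<alpha> (a *s x) + \<alpha> y + Fin \<epsilon>"
    using compat_a[of "a *s x + c *s y" y] pairA[OF True] by simp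
  then have "\<alpha> (a *s x + c *s y) \<le> \<alpha> (a *s x)" using cancel3 y0 by simp
  then show ?thesis using alpha_add[of "a *s x" "c *s y"] True by (simp add: min_def)
next
  case False
  then have F: "\<alpha> (c *s y) \<le> \<alpha> (a *s x)" by simp
  have "\<alpha> (a *s x + c *s y) + \<alpha> x + Fin \<epsilon> \<le> \<alpha> (c *s y) + \<alpha> x + Fin \<epsilon>"
    using compat_a[of "a *s x + c *s y" x] pairA'[OF F] by simp
  then have "\<alpha> (a *s x + c *s y) \<le> \<alpha> (c *s y)" using cancel3 x0 by simp
  moreover have "min (\<alpha> (a *s x)) (\<alpha> (c *s y)) = \<alpha> (c *s y)" using F by (simp add: min_absorb2)
  ultimately show ?thesis using alpha_add[of "a *s x" "c *s y"] by simp
qed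

lemma split_xy: "splitting {x, y}"
  unfolding splitting_def
proof (intro conjI allI)
  fix c :: "'v \<Rightarrow> 'a"
  show "\<alpha> (\<Sum>e\<in>{x, y}. c e *s e) = Min (insert Infty ((\<lambda>e. \<alpha> (c e *s e)) ` {x, y}))"
    using x_ne_y pair_alpha[of "c x" "c y"] by (simp add: min_def)
qed simp

lemma W_repr: "w \<in> span {x, y} \<Longrightarrow> \<exists>a c. w = a *s x + c *s y"
  using span_finite[of "{x, y}"] x_ne_y by auto

lemma lemmaB:
  assumes w: "w \<in> span {x, y}" and u: "b u x = 0" "b u y = 0"
  shows "\<alpha> (w + u) = min (\<alpha> w) (\<alpha> u)"
proof -
  obtain a c where wac: "w = a *s x + c *s y" using W_repr[OF w] by blast
  have "\<alpha> (w + u) \<le> \<alpha> w"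
  proof (cases "\<alpha> (a *s x) \<le> \<alpha> (c *s y)")
    case True
    have aw: "\<alpha> w = \<alpha> (a *s x)" using pair_alpha True wac by (simp add: min_def)
    have "b (w + u) y = b w y" using u by (simp add: pol_add1)
    then have "\<alpha> (w + u) + \<alpha> y + Fin \<epsilon> \<le> \<alpha> w + \<alpha> y + Fin \<epsilon>"
      using compat_a[of "w + u" y] pairA[OF True] aw wac by simp
    then show ?thesis using cancel3 y0 by simp
  next
    case False
    then have F: "\<alpha> (c *s y) \<le> \<alpha> (a *s x)" by simp
    have aw: "\<alpha> w = \<alpha> (c *s y)" using pair_alpha F wac by (simp add: min_def)
    have "b (w + u) x = b w x" using u by (simp add: pol_add1)
    then have "\<alpha> (w + u) + \<alpha> x + Fin \<epsilon> \<le> \<alpha> w + \<alpha> x + Fin \<epsilon>"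
      using compat_a[of "w + u" x] pairA'[OF F] aw wac by simp
    then show ?thesis using cancel3 x0 by simp
  qed
  then show ?thesis by (rule orth_min0)
qed

definition D where "D = b x x * b y y - b x y * b x y"

lemma D_nz: "D \<noteq> 0"
proof
  assume "D = 0"
  then have eq: "v (b x x * b y y) = v (b x y * b x y)" unfolding D_def by simp
  obtain tx ty where t: "\<alpha> x = Fin tx" "\<alpha> y = Fin ty" using alpha_nonzero_Fin x0 y0 by blast
  have sx: "Fin (tx + tx + \<epsilon>) < v (b x x)" using pol_self_strict[OF x0] t by simp
  have sy: "Fin (ty + ty + \<epsilon>) < v (b y y)" using pol_self_strict[OF y0] t by simp
  have vxy: "v (b x y * b x y) = Fin ((tx + ty + \<epsilon>) + (tx + ty + \<epsilon>))" using xy t by (simp add: v_mult)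
  show False
  proof (cases "v (b x x)"; cases "v (b y y)")
    fix s1 s2 assume s: "v (b x x) = Fin s1" "v (b y y) = Fin s2"
    have "(tx + tx + \<epsilon>) + (ty + ty + \<epsilon>) < s1 + s2" using sx sy s by (simp add: add_strict_mono)
    moreover have "s1 + s2 = (tx + ty + \<epsilon>) + (tx + ty + \<epsilon>)" using eq vxy s by (simp add: v_mult)
    ultimately show False by (simp add: algebra_simps)
  qed (use eq vxy in \<open>auto simp: v_mult\<close>)
qed

definition pa where "pa z = (b z x * b y y - b x y * b z y) / D"
definition pc where "pc z = (b x x * b z y - b x y * b z x) / D"
definition P where "P z = z - (pa z *s x + pc z *s y)"

lemma P_perp: "b (P z) x = 0" "b (P z) y = 0"
proof -
  have "b (P z) x = b z x - (pa z * b x x + pc z * b x y)"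
    unfolding P_def by (simp add: pol_diff1 pol_add1 pol_scale1 pol_sym[of y x])
  also have "pa z * b x x + pc z * b x y = b z x"
    unfolding pa_def pc_def using fld1[OF D_nz[unfolded D_def]] by (simp add: D_def)
  finally show "b (P z) x = 0" by simp
  have "b (P z) y = b z y - (pa z * b x y + pc z * b y y)"
    unfolding P_def by (simp add: pol_diff1 pol_add1 pol_scale1)
  also have "pa z * b x y + pc z * b y y = b z y"
    unfolding pa_def pc_def using fld2[OF D_nz[unfolded D_def]] by (simp add: D_def)
  finally show "b (P z) y = 0" by simp
qed

end


context qpair begin

lemma pa_add: "pa (z1 + z2) = pa z1 + pa z2"
  unfolding pa_def by (simp add: pol_add1 add_divide_distrib[symmetric] algebra_simps)
lemma pc_add: "pc (z1 + z2) = pc z1 + pc z2"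
  unfolding pc_def by (simp add: pol_add1 add_divide_distrib[symmetric] algebra_simps)
lemma pa_scale: "pa (k *s z) = k * pa z"
  unfolding pa_def by (simp add: pol_scale1 algebra_simps times_divide_eq_right)
lemma pc_scale: "pc (k *s z) = k * pc z"
  unfolding pc_def by (simp add: pol_scale1 algebra_simps times_divide_eq_right)

lemma P_add: "P (z1 + z2) = P z1 + P z2"
  unfolding P_def by (simp add: pa_add pc_add scale_left_distrib algebra_simps)
lemma P_scale: "P (k *s z) = k *s P z"
  unfolding P_def by (simp add: pa_scale pc_scale scale_right_diff_distrib scale_right_distrib)
lemma P_zero[simp]: "P 0 = 0" using P_scale[of 0 0] by simp
lemma P_neg: "P (- z) = - P z" using P_add[of z "- z"] by (simp add: eq_neg_iff_add_eq_0 add.commute)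
lemma P_diff: "P (z1 - z2) = P z1 - P z2" using P_add[of z1 "- z2"] P_neg by simp
lemma P_sum: "P (sum f I) = (\<Sum>i\<in>I. P (f i))"
  by (induction I rule: infinite_finite_induct) (auto simp: P_add)

lemma P_id: "b z x = 0 \<Longrightarrow> b z y = 0 \<Longrightarrow> P z = z"
  unfolding P_def pa_def pc_def by simp

lemma P_x: "P x = 0"
proof -
  have "pa x = 1" using D_nz unfolding pa_def D_def by simp
  moreover have "pc x = 0" unfolding pc_def by simp
  ultimately show ?thesis unfolding P_def by simp
qed

lemma P_y: "P y = 0"
proof -
  have "pc y = 1" using D_nz unfolding pc_def D_def by (simp add: pol_sym[of y x] algebra_simps)
  moreover have "pa y = 0" unfolding pa_def by (simp add: pol_sym[of y x])
  ultimately show ?thesis unfolding P_def by simp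
qed

lemma P_W: "w \<in> span {x, y} \<Longrightarrow> P w = 0"
  using W_repr[of w] by (auto simp: P_add P_scale P_x P_y)

lemma pr_W: "z - P z \<in> span {x, y}"
  unfolding P_def by (simp add: span_add span_scale span_base)

definition Uperp where "Uperp U = {z \<in> U. b z x = 0 \<and> b z y = 0}"

lemma subspace_Uperp: "subspace U \<Longrightarrow> subspace (Uperp U)"
  unfolding Uperp_def
  by (rule subspaceI) (auto simp: subspace_0 subspace_add subspace_scale pol_add1 pol_scale1)

lemma complement:
  assumes sTG: "splitting ({x, y} \<union> G)" and disj: "{x, y} \<inter> G = {}" and G0: "0 \<notin> G"
  shows "splitting (P ` G)" "0 \<notin> P ` G" "card (P ` G) = card G"
    "span (P ` G) = Uperp (span ({x, y} \<union> G))"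
    "\<And>u. u \<in> span G \<Longrightarrow> \<alpha> (P u) = \<alpha> u"
proof -
  have sG: "splitting G" using split_sub[OF sTG] by blast
  have fG: "finite G" using sG splitting_finite by blast
  show aP: "\<alpha> (P u) = \<alpha> u" if u: "u \<in> span G" for u
  proof -
    define w where "w = u - P u"
    have wW: "w \<in> span {x, y}" unfolding w_def by (rule pr_W)
    have "\<alpha> u = \<alpha> (w + P u)" unfolding w_def by simp
    also have "\<dots> = min (\<alpha> w) (\<alpha> (P u))" by (rule lemmaB[OF wW P_perp])
    finally have 1: "\<alpha> u \<le> \<alpha> (P u)" by simp
    have "\<alpha> (P u) = \<alpha> ((- w) + u)" unfolding w_def by simp
    also have "\<dots> = min (\<alpha> (- w)) (\<alpha> u)" by (rule split_union_min[OF sTG disj span_neg[OF wW] u])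
    finally have "\<alpha> (P u) \<le> \<alpha> u" by simp
    with 1 show ?thesis by simp
  qed
  have injspan: "inj_on P (span G)"
  proof
    fix u1 u2 assume u: "u1 \<in> span G" "u2 \<in> span G" "P u1 = P u2"
    have "\<alpha> (u1 - u2) = \<alpha> (P (u1 - u2))" using aP[of "u1 - u2"] span_diff[OF u(1,2)] by simp
    also have "\<dots> = Infty" using u(3) by (simp add: P_diff)
    finally show "u1 = u2" by simp
  qed
  have inj: "inj_on P G" using inj_on_subset[OF injspan span_superset] .
  show "card (P ` G) = card G" using card_image[OF inj] .
  show "0 \<notin> P ` G"
  proof
    assume "0 \<in> P ` G"
    then obtain g where "g \<in> G" "P g = 0" by auto
    then show False using aP[of g] span_base[of g G] G0 by (metis alpha_Infty_iff alpha_zero)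
  qed
  show "splitting (P ` G)"
    unfolding splitting_def
  proof (intro conjI allI)
    show "finite (P ` G)" using fG by simp
    fix c :: "'v \<Rightarrow> 'a"
    have "(\<Sum>e\<in>P ` G. c e *s e) = (\<Sum>g\<in>G. c (P g) *s P g)" by (simp add: sum.reindex[OF inj])
    also have "\<dots> = P (\<Sum>g\<in>G. c (P g) *s g)" by (simp add: P_sum P_scale)
    finally have 1: "(\<Sum>e\<in>P ` G. c e *s e) = P (\<Sum>g\<in>G. c (P g) *s g)" .
    have inG: "(\<Sum>g\<in>G. c (P g) *s g) \<in> span G" by (rule span_sum) (intro span_scale span_base; simp)
    have 2: "(\<lambda>e. \<alpha> (c e *s e)) ` P ` G = (\<lambda>g. \<alpha> (c (P g) *s g)) ` G"
      unfolding image_image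
    proof (rule image_cong[OF refl])
      fix g assume "g \<in> G"
      then have "\<alpha> (P (c (P g) *s g)) = \<alpha> (c (P g) *s g)" by (intro aP span_scale span_base)
      then show "\<alpha> (c (P g) *s P g) = \<alpha> (c (P g) *s g)" by (simp add: P_scale)
    qed
    show "\<alpha> (\<Sum>e\<in>P ` G. c e *s e) = Min (insert Infty ((\<lambda>e. \<alpha> (c e *s e)) ` P ` G))"
      unfolding 1 2 aP[OF inG] by (rule splittingD[OF sG])
  qed
  show "span (P ` G) = Uperp (span ({x, y} \<union> G))"
  proof
    have "P ` G \<subseteq> Uperp (span ({x, y} \<union> G))"
    proof
      fix z assume "z \<in> P ` G"
      then obtain g where g: "g \<in> G" "z = P g" by auto
      have "g \<in> span ({x, y} \<union> G)" using g(1) by (intro span_base) simp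
      moreover have "g - P g \<in> span ({x, y} \<union> G)" using pr_W span_mono[of "{x, y}" "{x, y} \<union> G"] by blast
      ultimately have "P g \<in> span ({x, y} \<union> G)" using span_diff by fastforce
      then show "z \<in> Uperp (span ({x, y} \<union> G))" unfolding Uperp_def using g P_perp by simp
    qed
    then show "span (P ` G) \<subseteq> Uperp (span ({x, y} \<union> G))"
      using span_minimal subspace_Uperp subspace_span by blast
  next
    show "Uperp (span ({x, y} \<union> G)) \<subseteq> span (P ` G)"
    proof
      fix z assume z: "z \<in> Uperp (span ({x, y} \<union> G))"
      then obtain t u where tu: "z = t + u" "t \<in> span {x, y}" "u \<in> span G"
        unfolding Uperp_def span_Un by blast
      have "z = P z" using z unfolding Uperp_def by (simp add: P_id)
      also have "\<dots> = P u" using tu by (simp add: P_add P_W)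
      finally have zu: "z = P u" .
      obtain c where "u = (\<Sum>g\<in>G. c g *s g)" using tu(3) span_finite[OF fG] by blast
      then have "P u = (\<Sum>g\<in>G. c g *s P g)" by (simp add: P_sum P_scale)
      also have "\<dots> \<in> span (P ` G)" by (rule span_sum) (intro span_scale span_base; simp)
      finally show "z \<in> span (P ` G)" using zu by simp
    qed
  qed
qed

end


lemma ext_Min_insert: "finite S \<Longrightarrow> ext_Min (insert a S) = min a (ext_Min S)"
proof -
  assume f: "finite S"
  have "ext_Min (insert a S) = Min (insert a (insert Infty S))"
    using f by (simp add: ext_Min_alt insert_commute)
  also have "\<dots> = min a (Min (insert Infty S))" by (rule Min_insert) (use f in auto)
  finally show ?thesis using f by (simp add: ext_Min_alt)
qed

context qsetting begin

definition nondeg where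
  "nondeg U \<longleftrightarrow> (\<forall>z\<in>U. z \<noteq> 0 \<longrightarrow> (\<exists>w\<in>U. w \<noteq> 0 \<and> v (b z w) = \<alpha> z + \<alpha> w + Fin \<epsilon>))"

definition good where
  "good U (n::nat) Vs \<longleftrightarrow>
     (\<forall>i<n. subspace (Vs i) \<and> dim (Vs i) = 2 \<and> Vs i \<subseteq> U) \<and>
     (\<forall>z\<in>U. \<exists>xs. (\<forall>i<n. xs i \<in> Vs i) \<and> z = (\<Sum>i<n. xs i)) \<and>
     (\<forall>xs. (\<forall>i<n. xs i \<in> Vs i) \<and> (\<Sum>i<n. xs i) = 0 \<longrightarrow> (\<forall>i<n. xs i = 0)) \<and>
     (\<forall>i<n. \<forall>j<n. i \<noteq> j \<longrightarrow> (\<forall>x\<in>Vs i. \<forall>y\<in>Vs j. b x y = 0)) \<and>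
     (\<forall>i<n. vnorm_on scale v (Vs i) \<alpha> \<and> compatible_on v \<epsilon> (Vs i) q \<alpha>) \<and>
     (\<forall>xs. (\<forall>i<n. xs i \<in> Vs i) \<longrightarrow> \<alpha> (\<Sum>i<n. xs i) = ext_Min ((\<lambda>i. \<alpha> (xs i)) ` {..<n}))"

end

context qpair begin

lemma W_dim: "dim (span {x, y}) = 2"
proof -
  have "independent {x, y}" using split_indep[OF split_xy] x0 y0 by auto
  then show ?thesis using dim_span_eq_card_independent x_ne_y by simp
qed

lemma W_vnorm: "vnorm_on scale v (span {x, y}) \<alpha>"
  unfolding vnorm_on_def
proof (intro conjI ballI allI)
  show "\<exists>B. finite B \<and> B \<subseteq> span {x, y} \<and> \<not> dependent B \<and> span B = span {x, y} \<and>
        (\<forall>c. \<alpha> (\<Sum>e\<in>B. c e *s e) = ext_Min ((\<lambda>e. \<alpha> (c e *s e)) ` B))"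
    using split_indep[OF split_xy] x0 y0 splittingD[OF split_xy]
    by (intro exI[of _ "{x, y}"]) (auto simp: span_superset ext_Min_alt)
qed (auto simp: alpha_scale alpha_add)

lemma W_compat: "compatible_on v \<epsilon> (span {x, y}) q \<alpha>"
  unfolding compatible_on_def
proof (intro conjI ballI impI)
  fix z assume z: "z \<in> span {x, y}" "z \<noteq> 0"
  obtain a c where zac: "z = a *s x + c *s y" using W_repr[OF z(1)] by blast
  show "\<exists>w\<in>span {x, y}. w \<noteq> 0 \<and> v (b z w) = \<alpha> z + \<alpha> w + Fin \<epsilon>"
  proof (cases "\<alpha> (a *s x) \<le> \<alpha> (c *s y)")
    case True
    then have "\<alpha> z = \<alpha> (a *s x)" using pair_alpha zac by (simp add: min_def)
    then show ?thesis using pairA[OF True] zac y0 by (intro bexI[of _ y]) (auto intro: span_base)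
  next
    case False
    then have F: "\<alpha> (c *s y) \<le> \<alpha> (a *s x)" by simp
    then have "\<alpha> z = \<alpha> (c *s y)" using pair_alpha zac by (simp add: min_def)
    then show ?thesis using pairA'[OF F] zac x0 by (intro bexI[of _ x]) (auto intro: span_base)
  qed
qed (auto simp: compat_a compat_b)

lemma W_perp: "t \<in> span {x, y} \<Longrightarrow> b u x = 0 \<Longrightarrow> b u y = 0 \<Longrightarrow> b u t = 0"
  using W_repr[of t] by (auto simp: pol_add2 pol_scale2)

lemma good_extend:
  assumes U: "subspace U" "x \<in> U" "y \<in> U" and g: "good (Uperp U) n Vs"
  shows "good U (Suc n) (Vs(n := span {x, y}))"
proof -
  let ?W = "span {x, y}"
  let ?Vs = "Vs(n := ?W)"
  have WU: "?W \<subseteq> U" using U by (intro span_minimal) auto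
  have g1: "\<forall>i<n. subspace (Vs i) \<and> dim (Vs i) = 2 \<and> Vs i \<subseteq> Uperp U"
    and g2: "\<forall>z\<in>Uperp U. \<exists>xs. (\<forall>i<n. xs i \<in> Vs i) \<and> z = (\<Sum>i<n. xs i)"
    and g3: "\<forall>xs. (\<forall>i<n. xs i \<in> Vs i) \<and> (\<Sum>i<n. xs i) = 0 \<longrightarrow> (\<forall>i<n. xs i = 0)"
    and g4: "\<forall>i<n. \<forall>j<n. i \<noteq> j \<longrightarrow> (\<forall>x\<in>Vs i. \<forall>y\<in>Vs j. b x y = 0)"
    and g5: "\<forall>i<n. vnorm_on scale v (Vs i) \<alpha> \<and> compatible_on v \<epsilon> (Vs i) q \<alpha>"
    and g6: "\<forall>xs. (\<forall>i<n. xs i \<in> Vs i) \<longrightarrow> \<alpha> (\<Sum>i<n. xs i) = ext_Min ((\<lambda>i. \<alpha> (xs i)) ` {..<n})"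
    using g unfolding good_def by auto
  have UpU: "Uperp U \<subseteq> U" unfolding Uperp_def by auto
  have sUp: "subspace (Uperp U)" using subspace_Uperp[OF U(1)] .
  have sumUp: "\<And>xs. (\<forall>i<n. xs i \<in> Vs i) \<Longrightarrow> (\<Sum>i<n. xs i) \<in> Uperp U"
    using g1 by (intro subspace_sum[OF sUp]) blast
  have sumSuc: "\<And>xs. (\<Sum>i<Suc n. xs i) = xs n + (\<Sum>i<n. xs i)" by (simp add: add.commute)
  have upd: "\<And>xs. (\<forall>i<Suc n. xs i \<in> ?Vs i) \<Longrightarrow> (\<forall>i<n. xs i \<in> Vs i) \<and> xs n \<in> ?W"
    by (auto simp: less_Suc_eq)
  have perpUp: "\<And>u. u \<in> Uperp U \<Longrightarrow> b u x = 0 \<and> b u y = 0" unfolding Uperp_def by auto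
  have c1: "\<forall>i<Suc n. subspace (?Vs i) \<and> dim (?Vs i) = 2 \<and> ?Vs i \<subseteq> U"
    using g1 W_dim WU UpU by (auto simp: less_Suc_eq)
  have c5: "\<forall>i<Suc n. vnorm_on scale v (?Vs i) \<alpha> \<and> compatible_on v \<epsilon> (?Vs i) q \<alpha>"
    using g5 W_vnorm W_compat by (auto simp: less_Suc_eq)
  have c2: "\<forall>z\<in>U. \<exists>xs. (\<forall>i<Suc n. xs i \<in> ?Vs i) \<and> z = (\<Sum>i<Suc n. xs i)"
  proof
    fix z assume z: "z \<in> U"
    have "z - P z \<in> U" using pr_W WU by blast
    then have "P z \<in> U" using z U(1) subspace_diff by fastforce
    then have "P z \<in> Uperp U" unfolding Uperp_def using P_perp by simp
    then obtain xs where xs: "\<forall>i<n. xs i \<in> Vs i" "P z = (\<Sum>i<n. xs i)" using g2 by metis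
    let ?xs = "xs(n := z - P z)"
    have "(\<Sum>i<n. ?xs i) = (\<Sum>i<n. xs i)" by (rule sum.cong) auto
    then have "(\<Sum>i<Suc n. ?xs i) = z" using sumSuc[of ?xs] xs(2) by simp
    moreover have "\<forall>i<Suc n. ?xs i \<in> ?Vs i" using xs(1) pr_W by (auto simp: less_Suc_eq)
    ultimately show "\<exists>xs. (\<forall>i<Suc n. xs i \<in> ?Vs i) \<and> z = (\<Sum>i<Suc n. xs i)" by metis
  qed
  have c3: "\<forall>xs. (\<forall>i<Suc n. xs i \<in> ?Vs i) \<and> (\<Sum>i<Suc n. xs i) = 0 \<longrightarrow> (\<forall>i<Suc n. xs i = 0)"
  proof (rule allI, rule impI)
    fix xs assume h: "(\<forall>i<Suc n. xs i \<in> ?Vs i) \<and> (\<Sum>i<Suc n. xs i) = 0"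
    have u: "\<forall>i<n. xs i \<in> Vs i" "xs n \<in> ?W" using upd h by auto
    have "\<alpha> (xs n + (\<Sum>i<n. xs i)) = min (\<alpha> (xs n)) (\<alpha> (\<Sum>i<n. xs i))"
      using lemmaB[OF u(2)] perpUp[OF sumUp[OF u(1)]] by blast
    moreover have "xs n + (\<Sum>i<n. xs i) = 0" using h by (simp add: add.commute)
    ultimately have "xs n = 0" "(\<Sum>i<n. xs i) = 0" by (auto simp: min_def split: if_splits)
    then have "\<forall>i<n. xs i = 0" using g3 u(1) by blast
    then show "\<forall>i<Suc n. xs i = 0" using \<open>xs n = 0\<close> by (auto simp: less_Suc_eq)
  qed
  have c4: "\<forall>i<Suc n. \<forall>j<Suc n. i \<noteq> j \<longrightarrow> (\<forall>s\<in>?Vs i. \<forall>t\<in>?Vs j. b s t = 0)"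
  proof (intro allI impI ballI)
    fix i j assume ij: "i < Suc n" "j < Suc n" "i \<noteq> j"
    fix s t assume st: "s \<in> ?Vs i" "t \<in> ?Vs j"
    show "b s t = 0"
    proof (cases "i = n")
      case True
      then have "j < n" using ij by simp
      then have "t \<in> Uperp U" using st(2) g1 ij by auto
      moreover have "s \<in> ?W" using st(1) True by simp
      ultimately have "b t s = 0" using W_perp perpUp by blast
      then show ?thesis by (simp add: pol_sym[of s t])
    next
      case False
      note F = False
      show ?thesis
      proof (cases "j = n")
        case True
        then have "i < n" using ij F by simp
        then have "s \<in> Uperp U" using st(1) g1 F by auto
        moreover have "t \<in> ?W" using st(2) True by simp
        ultimately show ?thesis using W_perp perpUp by blast
      next
        case False
        then have ijn: "i < n" "j < n" using ij F by auto
        then have "\<forall>x\<in>Vs i. \<forall>y\<in>Vs j. b x y = 0" using g4 ij(3) by simp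
        then show ?thesis using st ijn F False by simp
      qed
    qed
  qed
  have c6: "\<forall>xs. (\<forall>i<Suc n. xs i \<in> ?Vs i) \<longrightarrow> \<alpha> (\<Sum>i<Suc n. xs i) = ext_Min ((\<lambda>i. \<alpha> (xs i)) ` {..<Suc n})"
  proof (intro allI impI)
    fix xs assume h: "\<forall>i<Suc n. xs i \<in> ?Vs i"
    have u: "\<forall>i<n. xs i \<in> Vs i" "xs n \<in> ?W" using upd h by auto
    have "\<alpha> (\<Sum>i<Suc n. xs i) = \<alpha> (xs n + (\<Sum>i<n. xs i))" by (simp add: add.commute)
    also have "\<dots> = min (\<alpha> (xs n)) (\<alpha> (\<Sum>i<n. xs i))"
      using lemmaB[OF u(2)] perpUp[OF sumUp[OF u(1)]] by blast
    also have "\<dots> = ext_Min ((\<lambda>i. \<alpha> (xs i)) ` {..<Suc n})"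
      using g6 u(1) by (simp add: lessThan_Suc ext_Min_insert)
    finally show "\<alpha> (\<Sum>i<Suc n. xs i) = ext_Min ((\<lambda>i. \<alpha> (xs i)) ` {..<Suc n})" .
  qed
  show ?thesis unfolding good_def using c1 c2 c3 c4 c5 c6 by blast
qed

end


context qsetting begin

lemma main: "splitting B \<Longrightarrow> 0 \<notin> B \<Longrightarrow> nondeg (span B) \<Longrightarrow> \<exists>n Vs. good (span B) n Vs"
proof (induction "card B" arbitrary: B rule: less_induct)
  case less
  show ?case
  proof (cases "B = {}")
    case True
    have "good (span B) 0 (\<lambda>_. {})" unfolding good_def using True by (simp add: ext_Min_def not_less0 lessThan_0)
    then show ?thesis by blast
  next
    case False
    then obtain x where xB: "x \<in> B" by blast
    have x0: "x \<noteq> 0" using xB less.prems(2) by auto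
    have xU: "x \<in> span B" by (rule span_base[OF xB])
    obtain y where y: "y \<in> span B" "y \<noteq> 0" "v (b x y) = \<alpha> x + \<alpha> y + Fin \<epsilon>"
      using less.prems(3) xU x0 unfolding nondeg_def by blast
    interpret qp: qpair scale v q \<alpha> \<epsilon> x y by (unfold_locales) (use x0 y in auto)
    have T0: "0 \<notin> {x, y}" using x0 y by auto
    have TB: "{x, y} \<subseteq> span B" using xU y by auto
    obtain G where G: "G \<subseteq> B" "{x, y} \<inter> G = {}" "splitting ({x, y} \<union> G)" "span ({x, y} \<union> G) = span B"
      using extend_split[OF less.prems(1,2) qp.split_xy T0 TB] by blast
    have G0: "0 \<notin> G" using G(1) less.prems(2) by auto
    note cp = qp.complement[OF G(3) G(2) G0]
    have fB: "finite B" using less.prems(1) splitting_finite by blast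
    have "G \<subset> B" using G(1,2) xB by auto
    then have "card G < card B" using fB by (rule psubset_card_mono[rotated])
    then have card: "card (qp.P ` G) < card B" using cp(3) by simp
    have spB': "span (qp.P ` G) = qp.Uperp (span B)" using cp(4) G(4) by simp
    have WB: "span {x, y} \<subseteq> span B" using TB by (simp add: span_minimal)
    have nd: "nondeg (qp.Uperp (span B))"
      unfolding nondeg_def
    proof (intro ballI impI)
      fix z assume z: "z \<in> qp.Uperp (span B)" "z \<noteq> 0"
      then have zB: "z \<in> span B" and zp: "b z x = 0" "b z y = 0" unfolding qp.Uperp_def by auto
      obtain w0 where w0: "w0 \<in> span B" "w0 \<noteq> 0" "v (b z w0) = \<alpha> z + \<alpha> w0 + Fin \<epsilon>"
        using less.prems(3) zB z(2) unfolding nondeg_def by blast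
      define u where "u = qp.P w0"
      define t where "t = w0 - u"
      have tW: "t \<in> span {x, y}" unfolding t_def u_def by (rule qp.pr_W)
      have uB: "u \<in> span B" using span_diff[OF w0(1), of t] tW WB unfolding t_def by auto
      have uU: "u \<in> qp.Uperp (span B)" unfolding qp.Uperp_def u_def using uB qp.P_perp u_def by simp
      have wtu: "w0 = t + u" unfolding t_def by simp
      have "b z w0 = b z t + b z u" unfolding wtu by (rule pol_add2)
      also have "b z t = 0" using qp.W_perp[OF tW zp] .
      finally have bz: "b z w0 = b z u" by simp
      have "\<alpha> w0 = min (\<alpha> t) (\<alpha> u)" unfolding wtu using qp.lemmaB[OF tW] qp.P_perp u_def by blast
      then have le: "\<alpha> w0 \<le> \<alpha> u" by simp
      have "\<alpha> z + \<alpha> w0 + Fin \<epsilon> \<le> \<alpha> z + \<alpha> u + Fin \<epsilon>" using le by (intro ext_add_mono) auto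
      moreover have "\<alpha> z + \<alpha> u + Fin \<epsilon> \<le> v (b z u)" by (rule compat_a)
      ultimately have eq: "v (b z u) = \<alpha> z + \<alpha> u + Fin \<epsilon>" using w0(3) bz by simp
      have "u \<noteq> 0"
      proof
        assume "u = 0"
        then have "v (b z w0) = Infty" using bz by simp
        then show False using w0 z(2) by simp
      qed
      then show "\<exists>w\<in>qp.Uperp (span B). w \<noteq> 0 \<and> v (b z w) = \<alpha> z + \<alpha> w + Fin \<epsilon>"
        using uU eq by blast
    qed
    obtain n Vs where "good (span (qp.P ` G)) n Vs"
      using less.hyps[OF card cp(1) cp(2)] nd spB' by auto
    then have "good (qp.Uperp (span B)) n Vs" by (simp add: spB')
    then have "good (span B) (Suc n) (Vs(n := span {x, y}))"
      by (rule qp.good_extend[OF subspace_span xU y(1)])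
    then show ?thesis by blast
  qed
qed

end

theorem proposition4p5:
  fixes scale :: "'a::field \<Rightarrow> 'v::ab_group_add \<Rightarrow> 'v"
    and v :: "'a \<Rightarrow> 'g::linordered_ab_group_add ext"
    and q :: "'v \<Rightarrow> 'a"
    and \<alpha> :: "'v \<Rightarrow> 'g ext"
    and \<epsilon> :: 'g
  assumes "divisible_group TYPE('g)"
    and "valuation v"
    and "vector_space scale"
    and "\<exists>B. finite B \<and> module.span scale B = UNIV"
    and "quadratic_form scale q"
    and "vnorm_on scale v UNIV \<alpha>"
    and "compatible_on v \<epsilon> UNIV q \<alpha>"
    and "0 \<le> \<epsilon>"
    and "Fin \<epsilon> < v 2"
  shows "\<exists>(n::nat) (Vs :: nat \<Rightarrow> 'v set).
     (\<forall>i<n. module.subspace scale (Vs i) \<and> vector_space.dim scale (Vs i) = 2) \<and>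
     (\<forall>x. \<exists>xs. (\<forall>i<n. xs i \<in> Vs i) \<and> x = (\<Sum>i<n. xs i)) \<and>
     (\<forall>xs. (\<forall>i<n. xs i \<in> Vs i) \<and> (\<Sum>i<n. xs i) = 0 \<longrightarrow> (\<forall>i<n. xs i = 0)) \<and>
     (\<forall>i<n. \<forall>j<n. i \<noteq> j \<longrightarrow> (\<forall>x\<in>Vs i. \<forall>y\<in>Vs j. polar q x y = 0)) \<and>
     (\<forall>i<n. vnorm_on scale v (Vs i) \<alpha> \<and> compatible_on v \<epsilon> (Vs i) q \<alpha>) \<and>
     (\<forall>xs. (\<forall>i<n. xs i \<in> Vs i) \<longrightarrow>
        \<alpha> (\<Sum>i<n. xs i) = ext_Min ((\<lambda>i. \<alpha> (xs i)) ` {..<n}))"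
proof -
  interpret qs: qsetting scale v q \<alpha> \<epsilon>
    unfolding qsetting_def qsetting_axioms_def using assms by blast
  obtain B where B: "finite B" "\<not> qs.dependent B" "qs.span B = UNIV"
    "\<forall>c. \<alpha> (\<Sum>e\<in>B. scale (c e) e) = ext_Min ((\<lambda>e. \<alpha> (scale (c e) e)) ` B)"
    using assms(6) unfolding vnorm_on_def by blast
  have sB: "qs.splitting B" unfolding qs.splitting_def using B(1,4) by (simp add: ext_Min_alt)
  have B0: "0 \<notin> B" using B(2) qs.dependent_zero by blast
  have nd: "qs.nondeg (qs.span B)" unfolding qs.nondeg_def B(3) using qs.compat_c by blast
  obtain n Vs where g: "qs.good UNIV n Vs" using qs.main[OF sB B0 nd] B(3) by auto
  have gg: "(\<forall>i<n. qs.subspace (Vs i) \<and> qs.dim (Vs i) = 2 \<and> Vs i \<subseteq> UNIV) \<and>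
     (\<forall>z\<in>UNIV. \<exists>xs. (\<forall>i<n. xs i \<in> Vs i) \<and> z = (\<Sum>i<n. xs i)) \<and>
     (\<forall>xs. (\<forall>i<n. xs i \<in> Vs i) \<and> (\<Sum>i<n. xs i) = 0 \<longrightarrow> (\<forall>i<n. xs i = 0)) \<and>
     (\<forall>i<n. \<forall>j<n. i \<noteq> j \<longrightarrow> (\<forall>x\<in>Vs i. \<forall>y\<in>Vs j. polar q x y = 0)) \<and>
     (\<forall>i<n. vnorm_on scale v (Vs i) \<alpha> \<and> compatible_on v \<epsilon> (Vs i) q \<alpha>) \<and>
     (\<forall>xs. (\<forall>i<n. xs i \<in> Vs i) \<longrightarrow> \<alpha> (\<Sum>i<n. xs i) = ext_Min ((\<lambda>i. \<alpha> (xs i)) ` {..<n}))"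
    using g unfolding qs.good_def .
  note g1 = gg[THEN conjunct1]
  note g2 = gg[THEN conjunct2, THEN conjunct1]
  note g3 = gg[THEN conjunct2, THEN conjunct2, THEN conjunct1]
  note g4 = gg[THEN conjunct2, THEN conjunct2, THEN conjunct2, THEN conjunct1]
  note g5 = gg[THEN conjunct2, THEN conjunct2, THEN conjunct2, THEN conjunct2, THEN conjunct1]
  note g6 = gg[THEN conjunct2, THEN conjunct2, THEN conjunct2, THEN conjunct2, THEN conjunct2]
  have g1': "\<forall>i<n. qs.subspace (Vs i) \<and> qs.dim (Vs i) = 2" using g1 by simp
  have g2': "\<forall>z. \<exists>xs. (\<forall>i<n. xs i \<in> Vs i) \<and> z = (\<Sum>i<n. xs i)" using g2 by simp
  show ?thesis
    apply (rule exI[of _ n], rule exI[of _ Vs])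
    by (intro conjI g1' g2' g3 g4 g5 g6)
qed


end
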